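(* Let $n\ge 1$, let $x_1,\dots,x_n$ be distinct integers each greater than $1$, and let $D=\{1,0,x_1,\dots,x_n\}$. If $(T,s)$ is an optimal signed tree realizing $D$, then there is exactly one edge $e$ of $T$ with $s(e)=-$.
   Context: A signed tree is a pair $(T,s)$ where $T$ is a finite tree and $s:E(T)\to\{+,-\}$. The signed degree $sdeg(v)$ of a vertex is the number of incident positive edges minus the number of incident negative edges. $(T,s)$ realizes $D$ if $D=\{sdeg(v):v\in V(T)\}$. $\sigma(D)=\min\{|V(T)|: \text{some signed tree }(T,s)\text{ realizes }D\}$, and a signed tree $(T,s)$ realizing $D$ is optimal if $|V(T)|=\sigma(D)$. *)

theory Defs
  imports Main
begin

text \<open>A finite tree is a nonempty finite connected graph
  with card E = card V - 1 (equivalently, connected and acyclic).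
  A sign function s maps each edge to True (positive) or False (negative).\<close>

definition adj :: "'a set set \<Rightarrow> ('a \<times> 'a) set" where
  "adj E = {(u, v). {u, v} \<in> E}"

definition is_tree :: "'a set \<Rightarrow> 'a set set \<Rightarrow> bool" where
  "is_tree V E \<longleftrightarrow>
     finite V \<and> V \<noteq> {} \<and>
     (\<forall>e\<in>E. \<exists>u v. e = {u, v} \<and> u \<noteq> v \<and> u \<in> V \<and> v \<in> V) \<and>
     (\<forall>u\<in>V. \<forall>v\<in>V. (u, v) \<in> (adj E)\<^sup>*) \<and>
     card E = card V - 1"

definition sdeg :: "'a set set \<Rightarrow> ('a set \<Rightarrow> bool) \<Rightarrow> 'a \<Rightarrow> int" where
  "sdeg E s v = int (card {e\<in>E. v \<in> e \<and> s e}) - int (card {e\<in>E. v \<in> e \<and> \<not> s e})"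

definition realizes :: "'a set \<Rightarrow> 'a set set \<Rightarrow> ('a set \<Rightarrow> bool) \<Rightarrow> int set \<Rightarrow> bool" where
  "realizes V E s D \<longleftrightarrow> is_tree V E \<and> D = sdeg E s ` V"

text \<open>sigma D: least number of vertices of a signed tree realizing D
  (trees labelled by naturals; every finite tree is isomorphic to one).\<close>
definition sigma :: "int set \<Rightarrow> nat" where
  "sigma D = (LEAST k. \<exists>(V::nat set) E s. realizes V E s D \<and> card V = k)"

definition optimal :: "nat set \<Rightarrow> nat set set \<Rightarrow> (nat set \<Rightarrow> bool) \<Rightarrow> int set \<Rightarrow> bool" where
  "optimal V E s D \<longleftrightarrow> realizes V E s D \<and> card V = sigma D"

end

theory Submission
  imports Defs
begin

lemma adj_iff[simp]: "(u, v) \<in> adj E \<longleftrightarrow> {u, v} \<in> E"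
  by (simp add: adj_def)
lemma tree_edges: "is_tree V E \<Longrightarrow> \<forall>e\<in>E. \<exists>u v. e = {u, v} \<and> u \<noteq> v \<and> u \<in> V \<and> v \<in> V"
  unfolding is_tree_def by (elim conjE)
lemma tree_edge_sub: "is_tree V E \<Longrightarrow> e \<in> E \<Longrightarrow> e \<subseteq> V"
  using tree_edges by fastforce
lemma tree_finV: "is_tree V E \<Longrightarrow> finite V"
  unfolding is_tree_def by (elim conjE)
lemma tree_finE: "is_tree V E \<Longrightarrow> finite E"
  by (rule finite_subset[of E "Pow V"]) (auto dest: tree_edge_sub tree_finV)
lemma tree_ne: "is_tree V E \<Longrightarrow> V \<noteq> {}"
  unfolding is_tree_def by (elim conjE)
lemma tree_conn: "is_tree V E \<Longrightarrow> \<forall>u\<in>V. \<forall>v\<in>V. (u, v) \<in> (adj E)\<^sup>*"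
  unfolding is_tree_def by (elim conjE)
lemma tree_card: "is_tree V E \<Longrightarrow> card E = card V - 1"
  unfolding is_tree_def by (elim conjE)
lemma handshake:
  assumes "finite V" "finite F" "\<forall>e\<in>F. \<exists>u v. e = {u, v} \<and> u \<noteq> v \<and> u \<in> V \<and> v \<in> V"
  shows "(\<Sum>v\<in>V. card {e\<in>F. v \<in> e}) = 2 * card F"
proof -
  have "(\<Sum>v\<in>V. card {e\<in>F. v \<in> e}) = (\<Sum>v\<in>V. \<Sum>e\<in>F. if v \<in> e then 1 else 0)"
    using assms(2) by (simp add: sum.inter_filter[symmetric])
  also have "\<dots> = (\<Sum>e\<in>F. \<Sum>v\<in>V. if v \<in> e then 1 else 0)"
    by (rule sum.swap)
  also have "\<dots> = (\<Sum>e\<in>F. 2)"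
  proof (rule sum.cong[OF refl])
    fix e assume "e \<in> F"
    then obtain u v where e: "e = {u, v}" "u \<noteq> v" "u \<in> V" "v \<in> V" using assms(3) by blast
    have "(\<Sum>v\<in>V. if v \<in> e then 1 else 0) = card {x\<in>V. x \<in> e}"
      using assms(1) by (simp add: sum.inter_filter[symmetric])
    also have "{x\<in>V. x \<in> e} = {u, v}" using e by auto
    finally show "(\<Sum>v\<in>V. if v \<in> e then 1 else (0::nat)) = 2" using e by simp
  qed
  finally show ?thesis by simp
qed

lemma star:
  assumes T: "is_tree V E" and l: "l \<in> V" and F: "finite F" and disj: "F \<inter> V = {}"
    and pos: "\<forall>f\<in>F. s {l, f}"
  defines "E' \<equiv> E \<union> (\<lambda>f. {l, f}) ` F"
  shows "is_tree (V \<union> F) E'"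
    and "\<forall>v\<in>V-{l}. sdeg E' s v = sdeg E s v"
    and "sdeg E' s l = sdeg E s l + int (card F)"
    and "\<forall>f\<in>F. sdeg E' s f = 1"
proof -
  have finV: "finite V" and ne: "V \<noteq> {}" and edges: "\<forall>e\<in>E. \<exists>u v. e = {u, v} \<and> u \<noteq> v \<and> u \<in> V \<and> v \<in> V"
    and conn: "\<forall>u\<in>V. \<forall>v\<in>V. (u, v) \<in> (adj E)\<^sup>*" and cE: "card E = card V - 1"
    using tree_finV[OF T] tree_ne[OF T] tree_edges[OF T] tree_conn[OF T] tree_card[OF T] by auto
  have finE: "finite E" using T by (rule tree_finE)
  have sub: "\<And>e. e \<in> E \<Longrightarrow> e \<subseteq> V" using T tree_edge_sub by blast
  have lF: "l \<notin> F" using l disj by blast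
  have notE: "\<And>f. f \<in> F \<Longrightarrow> {l, f} \<notin> E" using sub disj by blast
  have inj: "inj_on (\<lambda>f. {l, f}) F" using lF by (auto simp: inj_on_def doubleton_eq_iff)
  have cE': "card E' = card E + card F"
    unfolding E'_def using finE F notE inj
    by (subst card_Un_disjoint) (auto simp: card_image)
  have adjsub: "adj E \<subseteq> adj E'" unfolding E'_def adj_def by auto
  have key: "\<forall>a\<in>V \<union> F. (l, a) \<in> (adj E')\<^sup>* \<and> (a, l) \<in> (adj E')\<^sup>*"
  proof
    fix a assume a: "a \<in> V \<union> F"
    show "(l, a) \<in> (adj E')\<^sup>* \<and> (a, l) \<in> (adj E')\<^sup>*"
    proof (cases "a \<in> V")
      case True
      then show ?thesis using conn l rtrancl_mono[OF adjsub] by blast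
    next
      case False
      then have "a \<in> F" using a by blast
      then have "{l, a} \<in> E'" "{a, l} \<in> E'" unfolding E'_def by (auto simp: insert_commute)
      then show ?thesis by auto
    qed
  qed
  show "is_tree (V \<union> F) E'"
    unfolding is_tree_def
  proof (intro conjI)
    show "finite (V \<union> F)" using finV F by simp
    show "V \<union> F \<noteq> {}" using ne by simp
    show "\<forall>e\<in>E'. \<exists>u v. e = {u, v} \<and> u \<noteq> v \<and> u \<in> V \<union> F \<and> v \<in> V \<union> F"
      unfolding E'_def using edges l lF by blast
    show "\<forall>u\<in>V \<union> F. \<forall>v\<in>V \<union> F. (u, v) \<in> (adj E')\<^sup>*"
      using key by (meson rtrancl_trans)
    have "card (V \<union> F) = card V + card F" using finV F disj by (simp add: card_Un_disjoint inf_commute)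
    moreover have "card V \<ge> 1" using finV ne by (simp add: Suc_leI card_gt_0_iff)
    ultimately show "card E' = card (V \<union> F) - 1" using cE cE' by simp
  qed
  show "\<forall>v\<in>V-{l}. sdeg E' s v = sdeg E s v"
  proof
    fix v assume v: "v \<in> V - {l}"
    have "\<And>P. {e\<in>E'. v \<in> e \<and> P e} = {e\<in>E. v \<in> e \<and> P e}"
      unfolding E'_def using v disj by auto
    then show "sdeg E' s v = sdeg E s v" unfolding sdeg_def by simp
  qed
  have "{e\<in>E'. l \<in> e \<and> s e} = {e\<in>E. l \<in> e \<and> s e} \<union> (\<lambda>f. {l, f}) ` F"
    unfolding E'_def using pos by auto
  moreover have "card ({e\<in>E. l \<in> e \<and> s e} \<union> (\<lambda>f. {l, f}) ` F) = card {e\<in>E. l \<in> e \<and> s e} + card F"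
    using finE F notE inj by (subst card_Un_disjoint) (auto simp: card_image)
  moreover have "{e\<in>E'. l \<in> e \<and> \<not> s e} = {e\<in>E. l \<in> e \<and> \<not> s e}"
    unfolding E'_def using pos by auto
  ultimately show "sdeg E' s l = sdeg E s l + int (card F)" unfolding sdeg_def by simp
  show "\<forall>f\<in>F. sdeg E' s f = 1"
  proof
    fix f assume f: "f \<in> F"
    have q1: "{e\<in>E'. f \<in> e \<and> s e} = {{l, f}}"
      unfolding E'_def using f pos sub disj lF by (auto simp: doubleton_eq_iff)
    have q2: "{e\<in>E'. f \<in> e \<and> \<not> s e} = {}"
      unfolding E'_def using f pos sub disj lF by (auto simp: doubleton_eq_iff)
    show "sdeg E' s f = 1" unfolding sdeg_def q1 q2 by simp
  qed
qed

lemma filter_insert: "{e \<in> insert a A. P e} = (if P a then insert a {e\<in>A. P e} else {e\<in>A. P e})" by auto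

lemma sdeg_calc: "{e\<in>E. v \<in> e \<and> s e} = A \<Longrightarrow> {e\<in>E. v \<in> e \<and> \<not> s e} = B \<Longrightarrow> sdeg E s v = int (card A) - int (card B)"
  by (simp add: sdeg_def)

definition sg :: "nat set \<Rightarrow> bool" where "sg e = (e \<noteq> {1, 2})"

lemma base:
  "is_tree {..<4::nat} {{0,1},{1,2},{2,3}} \<and> sdeg {{0,1},{1,2},{2,3}} sg 0 = 1 \<and>
   sdeg {{0,1},{1,2},{2,3}} sg ` {..<4} = {1, 0}"
proof -
  let ?E = "{{0,1},{1,2},{2,3}} :: nat set set"
  have V: "{..<4::nat} = {0,1,2,3}" by auto
  have r: "(0,1) \<in> (adj ?E)\<^sup>*" "(1,0) \<in> (adj ?E)\<^sup>*" "(1,2) \<in> (adj ?E)\<^sup>*"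
    "(2,1) \<in> (adj ?E)\<^sup>*" "(2,3) \<in> (adj ?E)\<^sup>*" "(3,2) \<in> (adj ?E)\<^sup>*"
    by (intro r_into_rtrancl; simp add: doubleton_eq_iff)+
  have r2: "(0,2) \<in> (adj ?E)\<^sup>*" "(2,0) \<in> (adj ?E)\<^sup>*" "(1,3) \<in> (adj ?E)\<^sup>*" "(3,1) \<in> (adj ?E)\<^sup>*"
    using r by (meson rtrancl_trans)+
  have r3: "(0,3) \<in> (adj ?E)\<^sup>*" "(3,0) \<in> (adj ?E)\<^sup>*"
    using r r2 by (meson rtrancl_trans)+
  have r0: "\<And>a. (a,a) \<in> (adj ?E)\<^sup>*" by simp
  have conn: "\<forall>u\<in>{0,1,2,3}. \<forall>v\<in>{0,1,2,3}. (u, v) \<in> (adj ?E)\<^sup>*"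
    by (simp only: ball_simps r r2 r3 r0 simp_thms)
  have cE: "card ?E = 3" by (simp add: doubleton_eq_iff)
  have ed: "\<forall>e\<in>?E. \<exists>u v. e = {u, v} \<and> u \<noteq> v \<and> u \<in> {0,1,2,3} \<and> v \<in> {0,1,2,3}"
  proof -
    have P: "\<And>u v A. u \<noteq> v \<Longrightarrow> u \<in> A \<Longrightarrow> v \<in> A \<Longrightarrow> \<exists>a b. {u,v}={a,b} \<and> a\<noteq>b \<and> a\<in>A \<and> b\<in>A"
      by blast
    show ?thesis by (simp only: ball_simps) (intro conjI P; simp)
  qed
  have tree: "is_tree {..<4::nat} ?E"
    unfolding is_tree_def V using conn cE ed by simp
  have s0: "sdeg ?E sg 0 = 1"
    by (subst sdeg_calc[where A="{{0,1}}" and B="{}"]; (simp only: filter_insert)?; simp add: sg_def doubleton_eq_iff)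
  have s1: "sdeg ?E sg 1 = 0"
    by (subst sdeg_calc[where A="{{0,1}}" and B="{{1,2}}"]; (simp only: filter_insert)?; simp add: sg_def doubleton_eq_iff)
  have s2: "sdeg ?E sg 2 = 0"
    by (subst sdeg_calc[where A="{{2,3}}" and B="{{1,2}}"]; (simp only: filter_insert)?; simp add: sg_def doubleton_eq_iff)
  have s3: "sdeg ?E sg 3 = 1"
    by (subst sdeg_calc[where A="{{2,3}}" and B="{}"]; (simp only: filter_insert)?; simp add: sg_def doubleton_eq_iff)
  have im: "sdeg ?E sg ` {0,1,2,3} = {1,0}" by (simp only: image_insert image_empty s0 s1 s2 s3) auto
  show ?thesis using tree s0 im unfolding V by simp
qed


lemma construct:
  fixes A :: "int set"
  assumes "finite A" "\<forall>a\<in>A. a \<ge> 2"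
  shows "\<exists>V E l. is_tree V E \<and> V = {..<card V} \<and> 4 \<le> card V \<and>
     int (card V) = 4 + (\<Sum>a\<in>A. a - 1) \<and> l \<in> V \<and> sdeg E sg l = 1 \<and> sdeg E sg ` V = {1,0} \<union> A"
  using assms
proof (induction A rule: finite_induct)
  case empty
  have "{..<4::nat} = {..<card {..<4::nat}}" by simp
  then show ?case using base
    by (intro exI[of _ "{..<4::nat}"] exI[of _ "{{0,1},{1,2},{2,3}}"] exI[of _ 0]) simp
next
  case (insert a A)
  have "\<exists>V E l. is_tree V E \<and> V = {..<card V} \<and> 4 \<le> card V \<and>
     int (card V) = 4 + (\<Sum>a\<in>A. a - 1) \<and> l \<in> V \<and> sdeg E sg l = 1 \<and> sdeg E sg ` V = {1,0} \<union> A"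
    using insert.IH insert.prems by simp
  then obtain V E l where T: "is_tree V E" and VN: "V = {..<card V}" and N4: "4 \<le> card V"
    and cV: "int (card V) = 4 + (\<Sum>a\<in>A. a - 1)" and l: "l \<in> V" and sl: "sdeg E sg l = 1"
    and im: "sdeg E sg ` V = {1,0} \<union> A"
    by blast
  define N where "N = card V"
  define k where "k = nat (a - 1)"
  define F where "F = {N..<N+k}"
  have a2: "a \<ge> 2" using insert.prems by simp
  have k1: "k \<ge> 1" and ka: "int k = a - 1" using a2 by (simp_all add: k_def)
  have finF: "finite F" by (simp add: F_def)
  have VN': "V = {..<N}" unfolding N_def by (rule VN)
  have disj: "F \<inter> V = {}" unfolding VN' F_def by auto
  have pos: "\<forall>f\<in>F. sg {l, f}"
  proof
    fix f assume f: "f \<in> F"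
    then have "f \<ge> 4" using N4 by (simp add: F_def N_def)
    then have "f \<notin> {1,2}" by auto
    then show "sg {l, f}" unfolding sg_def by auto
  qed
  define E' where "E' = E \<union> (\<lambda>f. {l, f}) ` F"
  note S = star[OF T l finF disj pos, folded E'_def]
  have V': "V \<union> F = {..<N+k}" unfolding VN' F_def by auto
  have cV': "card (V \<union> F) = N + k" using V' by simp
  have NF: "N \<in> F" using k1 by (simp add: F_def)
  have sN: "sdeg E' sg N = 1" using S(4) NF by blast
  have sl': "sdeg E' sg l = a" using S(3) sl ka finF by (simp add: F_def)
  have img: "sdeg E' sg ` (V \<union> F) = {1,0} \<union> insert a A"
  proof (rule set_eqI, rule iffI)
    fix y assume "y \<in> sdeg E' sg ` (V \<union> F)"
    then obtain v where v: "v \<in> V \<union> F" "y = sdeg E' sg v" by blast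
    show "y \<in> {1,0} \<union> insert a A"
    proof (cases "v \<in> F")
      case True then show ?thesis using S(4) v by simp
    next
      case False
      then have vV: "v \<in> V" using v by blast
      show ?thesis
      proof (cases "v = l")
        case True then show ?thesis using v sl' by simp
      next
        case False
        then have "y = sdeg E sg v" using S(2) vV v by simp
        then have "y \<in> {1,0} \<union> A" using im vV by blast
        then show ?thesis by blast
      qed
    qed
  next
    fix y assume y: "y \<in> {1,0} \<union> insert a A"
    show "y \<in> sdeg E' sg ` (V \<union> F)"
    proof (cases "y = 1")
      case True then show ?thesis using sN NF by (metis UnI2 image_eqI)
    next
      case False
      show ?thesis
      proof (cases "y = a")
        case True then show ?thesis using sl' l by (metis UnI1 image_eqI)
      next
        case False
        with y \<open>y \<noteq> 1\<close> have "y \<in> {1,0} \<union> A" by blast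
        then obtain v where vV: "v \<in> V" and yv: "y = sdeg E sg v" using im by blast
        then have "v \<noteq> l" using sl \<open>y \<noteq> 1\<close> by blast
        then have "y = sdeg E' sg v" using S(2) vV yv by simp
        then show ?thesis using vV by blast
      qed
    qed
  qed
  have sum: "(\<Sum>b\<in>insert a A. b - 1) = (a - 1) + (\<Sum>b\<in>A. b - 1)"
    using insert.hyps by simp
  show ?case
  proof (intro exI conjI)
    show "is_tree (V \<union> F) E'" using S(1) .
    show "V \<union> F = {..<card (V \<union> F)}" using V' cV' by simp
    show "4 \<le> card (V \<union> F)" using cV' N4 N_def by simp
    show "int (card (V \<union> F)) = 4 + (\<Sum>b\<in>insert a A. b - 1)"
      using cV' cV ka sum N_def by simp
    show "N \<in> V \<union> F" using NF by blast
    show "sdeg E' sg N = 1" using sN .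
    show "sdeg E' sg ` (V \<union> F) = {1,0} \<union> insert a A" using img .
  qed
qed


lemma sigma_le:
  assumes "realizes (V::nat set) E s D"
  shows "sigma D \<le> card V"
  unfolding sigma_def using assms by (intro Least_le) blast

theorem mainTheorem10:
  fixes n :: nat and x :: "nat \<Rightarrow> int" and V :: "nat set" and E :: "nat set set"
    and s :: "nat set \<Rightarrow> bool"
  assumes "n \<ge> 1"
    and "inj_on x {1..n}"
    and "\<forall>i\<in>{1..n}. x i > 1"
    and "optimal V E s ({1, 0} \<union> x ` {1..n})"
  shows "\<exists>!e. e \<in> E \<and> \<not> s e"
proof -
  define D where "D = {1, 0} \<union> x ` {1..n}"
  define A where "A = x ` {1..n}"
  have R: "realizes V E s D" and cVs: "card V = sigma D"
    using assms(4) unfolding optimal_def D_def by blast+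
  have T: "is_tree V E" and DV: "D = sdeg E s ` V" using R unfolding realizes_def by blast+
  define N where "N = card V"
  define X where "X = (\<Sum>i\<in>{1..n}. x i)"
  have finA: "finite A" unfolding A_def by simp
  have A2: "\<forall>a\<in>A. a \<ge> 2" unfolding A_def using assms(3) by force
  obtain V0 E0 l where T0: "is_tree V0 E0" and c0: "int (card V0) = 4 + (\<Sum>a\<in>A. a - 1)"
    and im0: "sdeg E0 sg ` V0 = {1,0} \<union> A"
    using construct[OF finA A2] by blast
  have "realizes V0 E0 sg D" unfolding realizes_def D_def A_def using T0 im0 A_def by simp
  then have "sigma D \<le> card V0" by (rule sigma_le)
  moreover have "(\<Sum>a\<in>A. a - 1) = (\<Sum>i\<in>{1..n}. x i - 1)"
    unfolding A_def using assms(2) by (simp add: sum.reindex)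
  moreover have "(\<Sum>i\<in>{1..n}. x i - 1) = X - int n"
    unfolding X_def by (simp add: sum_subtractf)
  ultimately have upper: "int N \<le> 4 + X - int n" using c0 cVs N_def by linarith
  have finV: "finite V" using T by (rule tree_finV)
  have finE: "finite E" using T by (rule tree_finE)
  have edges: "\<forall>e\<in>E. \<exists>u v. e = {u, v} \<and> u \<noteq> v \<and> u \<in> V \<and> v \<in> V" using T by (rule tree_edges)
  define P where "P = {e\<in>E. s e}"
  define Q where "Q = {e\<in>E. \<not> s e}"
  have finP: "finite P" and finQ: "finite Q" using finE by (simp_all add: P_def Q_def)
  have PQ: "card P + card Q = card E"
  proof -
    have "P \<union> Q = E" "P \<inter> Q = {}" unfolding P_def Q_def by blast+
    then show ?thesis using card_Un_disjoint[OF finP finQ] by simp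
  qed
  have cE: "card E = N - 1" using tree_card[OF T] N_def by simp
  have N1: "N \<ge> 1" using finV tree_ne[OF T] N_def by (simp add: Suc_leI card_gt_0_iff)
  have edP: "\<forall>e\<in>P. \<exists>u v. e = {u, v} \<and> u \<noteq> v \<and> u \<in> V \<and> v \<in> V" using edges unfolding P_def by blast
  have edQ: "\<forall>e\<in>Q. \<exists>u v. e = {u, v} \<and> u \<noteq> v \<and> u \<in> V \<and> v \<in> V" using edges unfolding Q_def by blast
  have hP: "(\<Sum>v\<in>V. card {e\<in>P. v \<in> e}) = 2 * card P" by (rule handshake[OF finV finP edP])
  have hQ: "(\<Sum>v\<in>V. card {e\<in>Q. v \<in> e}) = 2 * card Q" by (rule handshake[OF finV finQ edQ])
  have sd: "\<And>v. sdeg E s v = int (card {e\<in>P. v \<in> e}) - int (card {e\<in>Q. v \<in> e})"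
  proof -
    fix v
    have "{e\<in>P. v \<in> e} = {e\<in>E. v \<in> e \<and> s e}" "{e\<in>Q. v \<in> e} = {e\<in>E. v \<in> e \<and> \<not> s e}"
      unfolding P_def Q_def by blast+
    then show "sdeg E s v = int (card {e\<in>P. v \<in> e}) - int (card {e\<in>Q. v \<in> e})"
      unfolding sdeg_def by simp
  qed
  have Ssum: "(\<Sum>v\<in>V. sdeg E s v) = 2 * int (card P) - 2 * int (card Q)"
  proof -
    have "(\<Sum>v\<in>V. sdeg E s v) = (\<Sum>v\<in>V. int (card {e\<in>P. v \<in> e})) - (\<Sum>v\<in>V. int (card {e\<in>Q. v \<in> e}))"
      by (simp add: sd sum_subtractf)
    also have "\<dots> = int (\<Sum>v\<in>V. card {e\<in>P. v \<in> e}) - int (\<Sum>v\<in>V. card {e\<in>Q. v \<in> e})"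
      by simp
    also have "\<dots> = 2 * int (card P) - 2 * int (card Q)" using hP hQ by simp
    finally show ?thesis .
  qed
  have "\<forall>i\<in>{1..n}. \<exists>v. v \<in> V \<and> sdeg E s v = x i"
  proof
    fix i assume "i \<in> {1..n}"
    then have "x i \<in> sdeg E s ` V" using DV unfolding D_def by blast
    then show "\<exists>v. v \<in> V \<and> sdeg E s v = x i" unfolding image_iff by metis
  qed
  then obtain g where g: "\<forall>i\<in>{1..n}. g i \<in> V \<and> sdeg E s (g i) = x i"
    using bchoice[of "{1..n}" "\<lambda>i v. v \<in> V \<and> sdeg E s v = x i"] by blast
  have injg: "inj_on g {1..n}"
  proof (rule inj_onI)
    fix i j assume "i \<in> {1..n}" "j \<in> {1..n}" "g i = g j"
    then have "x i = x j" using g by metis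
    then show "i = j" using assms(2) \<open>i \<in> {1..n}\<close> \<open>j \<in> {1..n}\<close> by (meson inj_onD)
  qed
  define W where "W = g ` {1..n}"
  have WV: "W \<subseteq> V" unfolding W_def using g by blast
  have cW: "card W = n" unfolding W_def using injg by (simp add: card_image)
  have finW: "finite W" unfolding W_def by simp
  have sW: "(\<Sum>v\<in>W. sdeg E s v) = X"
    unfolding W_def X_def using injg g by (simp add: sum.reindex)
  define Z where "Z = {v\<in>V. sdeg E s v = 0}"
  have nonneg: "\<And>v. v \<in> V \<Longrightarrow> sdeg E s v \<ge> (if v \<in> Z then 0 else 1)"
  proof -
    fix v assume v: "v \<in> V"
    then have "sdeg E s v \<in> D" using DV by blast
    then have "sdeg E s v \<ge> 0" unfolding D_def using assms(3) by force
    then show "sdeg E s v \<ge> (if v \<in> Z then 0 else 1)" unfolding Z_def using v by auto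
  qed
  have finVW: "finite (V - W)" using finV by simp
  have "(\<Sum>v\<in>V - W. sdeg E s v) \<ge> (\<Sum>v\<in>V - W. (if v \<notin> Z then 1 else 0))"
  proof (rule sum_mono)
    fix v assume "v \<in> V - W"
    then have "(if v \<in> Z then 0 else 1) \<le> sdeg E s v" using nonneg by blast
    then show "(if v \<notin> Z then 1 else 0) \<le> sdeg E s v" by (simp split: if_splits)
  qed
  also have "(\<Sum>v\<in>V - W. (if v \<notin> Z then 1 else 0)) = (\<Sum>v\<in>{v\<in>V - W. v \<notin> Z}. (1::int))"
    by (rule sum.inter_filter[OF finVW, symmetric])
  also have "\<dots> = int (card {v\<in>V - W. v \<notin> Z})" by simp
  finally have sVW: "(\<Sum>v\<in>V - W. sdeg E s v) \<ge> int (card {v\<in>V - W. v \<notin> Z})" .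
  have "card (V - W) \<le> card ({v\<in>V - W. v \<notin> Z} \<union> Z)"
    using finV by (intro card_mono) (auto simp: Z_def)
  also have "\<dots> \<le> card {v\<in>V - W. v \<notin> Z} + card Z" by (rule card_Un_le)
  finally have cVW: "card (V - W) \<le> card {v\<in>V - W. v \<notin> Z} + card Z" .
  have cVW2: "card (V - W) = N - n" using card_Diff_subset[OF finW WV] cW N_def by simp
  \<comment> \<open>zero vertices lie on negative edges\<close>
  have D2: "card D \<ge> 2"
  proof -
    have "{1, 0} \<subseteq> D" unfolding D_def by blast
    moreover have "finite D" unfolding D_def by simp
    ultimately have "card {1, 0::int} \<le> card D" by (rule card_mono[rotated])
    then show ?thesis by simp
  qed
  have "card D \<le> card V" using DV finV by (simp add: card_image_le)
  then have V2: "card V \<ge> 2" using D2 by simp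
  have ZQ: "Z \<subseteq> \<Union>Q"
  proof
    fix z assume z: "z \<in> Z"
    then have zV: "z \<in> V" and sz: "sdeg E s z = 0" unfolding Z_def by auto
    show "z \<in> \<Union>Q"
    proof (rule ccontr)
      assume nz: "z \<notin> \<Union>Q"
      then have q0: "{e\<in>Q. z \<in> e} = {}" by blast
      have cc: "card {e\<in>P. z \<in> e} = card {e\<in>Q. z \<in> e}" using sd[of z] sz by linarith
      have "card {e\<in>P. z \<in> e} = 0" using cc unfolding q0 by simp
      then have "{e\<in>P. z \<in> e} = {}" using finP by simp
      with q0 have noedge: "\<forall>e\<in>E. z \<notin> e" unfolding P_def Q_def by blast
      have "\<exists>w\<in>V. w \<noteq> z"
      proof (rule ccontr)
        assume "\<not> (\<exists>w\<in>V. w \<noteq> z)"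
        then have "V \<subseteq> {z}" by blast
        then have "card V \<le> 1" using card_mono[of "{z}" V] by simp
        then show False using V2 by simp
      qed
      then obtain w where w: "w \<in> V" "w \<noteq> z" by blast
      have "(z, w) \<in> (adj E)\<^sup>*" using tree_conn[OF T] zV w(1) by blast
      then show False
      proof (rule converse_rtranclE)
        assume "z = w" then show False using w by simp
      next
        fix y assume "(z, y) \<in> adj E"
        then have "{z, y} \<in> E" by simp
        then show False using noedge by blast
      qed
    qed
  qed
  have "card Z \<le> card (\<Union>Q)" using ZQ finQ edQ
    by (intro card_mono) (auto intro!: finite_Union)
  also have "\<dots> \<le> sum card Q" by (rule card_Union_le_sum_card)
  also have "sum card Q = (\<Sum>e\<in>Q. 2)"
  proof (rule sum.cong[OF refl])
    fix e assume "e \<in> Q"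
    then obtain u v where "e = {u, v}" "u \<noteq> v" using edQ by blast
    then show "card e = 2" by simp
  qed
  finally have cZ: "card Z \<le> 2 * card Q" by simp
  have "0 \<in> D" unfolding D_def by blast
  then have "0 \<in> sdeg E s ` V" using DV by simp
  then obtain z where "z \<in> V" "sdeg E s z = 0" by (metis imageE)
  then have "z \<in> Z" unfolding Z_def by blast
  then have "Q \<noteq> {}" using ZQ by blast
  then have q1: "card Q \<ge> 1" using finQ by (simp add: Suc_leI card_gt_0_iff)
  have split: "(\<Sum>v\<in>V. sdeg E s v) = (\<Sum>v\<in>W. sdeg E s v) + (\<Sum>v\<in>V - W. sdeg E s v)"
    using sum.subset_diff[OF WV finV] by (simp add: add.commute)
  have "card Q \<le> 1"
    using split sW sVW cVW cVW2 cZ Ssum PQ cE N1 upper assms(1) by linarith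
  then have "card Q = 1" using q1 by simp
  then obtain e where "Q = {e}" by (auto simp: card_1_singleton_iff)
  then show ?thesis unfolding Q_def by blast
qed

end
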